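(* Let $\theta:\Omega A\to\Omega B$ be a map of differential graded algebras, let $M$ be a right $A$-module and $\nabla_0:\mathrm{Hom}_A(\Omega^1A,M)\to M$ a hom-connection. View $B$ and $\Omega^1B$ as $A$-bimodules via $\theta$, regard $\mathrm{Hom}_A(B,M)$ as a right $B$-module by $(gb)(b')=g(bb')$, and identify $\mathrm{Hom}_B(\Omega^1B,\mathrm{Hom}_A(B,M))\cong\mathrm{Hom}_A(\Omega^1B,M)$ via $f\mapsto(\omega\mapsto f(\omega)(1))$. For $b\in B$ let $\ell_b:\Omega^1B\to\Omega^1B$, $\omega\mapsto b\omega$. Then the formula $$\nabla_0^\theta(f)(b):=\nabla_0(f\circ\ell_b\circ\theta)-f(db),\qquad f\in\mathrm{Hom}_A(\Omega^1B,M),\ b\in B,$$ (where $f\circ\ell_b\circ\theta$ is restricted to $\Omega^1A$) defines a hom-connection $\nabla^\theta_0:\mathrm{Hom}_B(\Omega^1B,\mathrm{Hom}_A(B,M))\to\mathrm{Hom}_A(B,M)$ on the right $B$-module $\mathrm{Hom}_A(B,M)$ with respect to $\Omega B$.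
   Context: All algebras are associative and unital over a field $k$. A differential graded algebra $\Omega A=\bigoplus_{n\ge0}\Omega^nA$ over $A=\Omega^0A$ has a degree-one differential $d$ with $d^2=0$ satisfying the graded Leibniz rule; a map of differential graded algebras is a degree-preserving unital algebra map commuting with the differentials. $\mathrm{Hom}_A$ denotes right $A$-linear maps. For a right $A$-module $P$, $\mathrm{Hom}_A(\Omega^1A,P)$ is a right $A$-module via $(fa)(\omega)=f(a\omega)$. A (right) hom-connection on $P$ with respect to $\Omega A$ is a $k$-linear map $\nabla_0:\mathrm{Hom}_A(\Omega^1A,P)\to P$ with $\nabla_0(fa)=\nabla_0(f)a+f(da)$ for all $f$ and $a\in A$; analogously for right $B$-modules with respect to $\Omega B$. *)

theory Defs
  imports Main "HOL-Library.Function_Algebras"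
begin

text \<open>The whole algebra
  Omega A is the type 'w (a ring); sm is the k-scalar action, Om n is the degree-n
  piece Omega^n A, and d the differential.  Omega A is the internal direct sum of
  the Om n; A = Om 0.\<close>
definition dga :: "('k::field \<Rightarrow> 'w::ring_1 \<Rightarrow> 'w) \<Rightarrow> (nat \<Rightarrow> 'w set) \<Rightarrow> ('w \<Rightarrow> 'w) \<Rightarrow> bool" where
  "dga sm Om d \<longleftrightarrow>
     \<comment> \<open>associative unital k-algebra\<close>
     (\<forall>c x y. sm c (x + y) = sm c x + sm c y) \<and>
     (\<forall>c e x. sm (c + e) x = sm c x + sm e x) \<and>
     (\<forall>c e x. sm (c * e) x = sm c (sm e x)) \<and>
     (\<forall>x. sm 1 x = x) \<and>
     (\<forall>c x y. sm c (x * y) = sm c x * y \<and> sm c (x * y) = x * sm c y) \<and>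
     \<comment> \<open>grading: k-subspaces, multiplicative, unit in degree 0, direct sum\<close>
     (\<forall>n. 0 \<in> Om n \<and> (\<forall>x\<in>Om n. \<forall>y\<in>Om n. x + y \<in> Om n) \<and> (\<forall>c. \<forall>x\<in>Om n. sm c x \<in> Om n)) \<and>
     (\<forall>m n. \<forall>x\<in>Om m. \<forall>y\<in>Om n. x * y \<in> Om (m + n)) \<and>
     1 \<in> Om 0 \<and>
     (\<forall>x. \<exists>!c::nat \<Rightarrow> 'w. finite {n. c n \<noteq> 0} \<and> (\<forall>n. c n \<in> Om n) \<and>
            x = (\<Sum>n\<in>{n. c n \<noteq> 0}. c n)) \<and>
     \<comment> \<open>differential: k-linear, degree one, square zero, graded Leibniz rule\<close>
     (\<forall>x y. d (x + y) = d x + d y) \<and>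
     (\<forall>c x. d (sm c x) = sm c (d x)) \<and>
     (\<forall>n. \<forall>x\<in>Om n. d x \<in> Om (Suc n)) \<and>
     (\<forall>x. d (d x) = 0) \<and>
     (\<forall>n. \<forall>x\<in>Om n. \<forall>y. d (x * y) = d x * y + (-1) ^ n * x * d y)"

definition dga_map ::
  "('k::field \<Rightarrow> 'w::ring_1 \<Rightarrow> 'w) \<Rightarrow> (nat \<Rightarrow> 'w set) \<Rightarrow> ('w \<Rightarrow> 'w) \<Rightarrow>
   ('k \<Rightarrow> 'v::ring_1 \<Rightarrow> 'v) \<Rightarrow> (nat \<Rightarrow> 'v set) \<Rightarrow> ('v \<Rightarrow> 'v) \<Rightarrow> ('w \<Rightarrow> 'v) \<Rightarrow> bool" where
  "dga_map smA OmA dA smB OmB dB th \<longleftrightarrow>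
     (\<forall>x y. th (x + y) = th x + th y) \<and>
     (\<forall>c x. th (smA c x) = smB c (th x)) \<and>
     (\<forall>x y. th (x * y) = th x * th y) \<and>
     th 1 = 1 \<and>
     (\<forall>n. \<forall>x\<in>OmA n. th x \<in> OmB n) \<and>
     (\<forall>x. th (dA x) = dB (th x))"

definition right_module :: "'w::ring_1 set \<Rightarrow> ('m::ab_group_add \<Rightarrow> 'w \<Rightarrow> 'm) \<Rightarrow> bool" where
  "right_module R act \<longleftrightarrow>
     (\<forall>m m'. \<forall>a\<in>R. act (m + m') a = act m a + act m' a) \<and>
     (\<forall>m. \<forall>a\<in>R. \<forall>a'\<in>R. act m (a + a') = act m a + act m a') \<and>
     (\<forall>m. \<forall>a\<in>R. \<forall>a'\<in>R. act m (a * a') = act (act m a) a') \<and>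
     (\<forall>m. act m 1 = m)"

text \<open>Hom_R(N, P): right R-linear maps from the module with carrier N (action actN)
  to the module with carrier P (action actP); maps are taken extensional
  (zero outside N) so that they are determined by their values on N.\<close>
definition homR ::
  "'w set \<Rightarrow> 'n::ab_group_add set \<Rightarrow> ('n \<Rightarrow> 'w \<Rightarrow> 'n) \<Rightarrow>
   'p::ab_group_add set \<Rightarrow> ('p \<Rightarrow> 'w \<Rightarrow> 'p) \<Rightarrow> ('n \<Rightarrow> 'p) set" where
  "homR R N actN P actP =
     {f. (\<forall>x\<in>N. f x \<in> P) \<and>
         (\<forall>x\<in>N. \<forall>y\<in>N. f (x + y) = f x + f y) \<and>
         (\<forall>x\<in>N. \<forall>a\<in>R. f (actN x a) = actP (f x) a) \<and>
         (\<forall>x. x \<notin> N \<longrightarrow> f x = 0)}"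

text \<open>Hom(Omega^1, P) is a right module via
  (f a)(w) = f(a w); its k-structure is via c |-> c 1 in Omega^0.\<close>
definition hom_connection ::
  "('k::field \<Rightarrow> 'w::ring_1 \<Rightarrow> 'w) \<Rightarrow> (nat \<Rightarrow> 'w set) \<Rightarrow> ('w \<Rightarrow> 'w) \<Rightarrow>
   'p::ab_group_add set \<Rightarrow> ('p \<Rightarrow> 'w \<Rightarrow> 'p) \<Rightarrow> (('w \<Rightarrow> 'p) \<Rightarrow> 'p) \<Rightarrow> bool" where
  "hom_connection sm Om d P actP nab \<longleftrightarrow>
     (let H = homR (Om 0) (Om 1) (\<lambda>w a. w * a) P actP in
       (\<forall>f\<in>H. nab f \<in> P) \<and>
       (\<forall>f\<in>H. \<forall>g\<in>H. nab (f + g) = nab f + nab g) \<and>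
       (\<forall>c. \<forall>f\<in>H. nab (\<lambda>w. actP (f w) (sm c 1)) = actP (nab f) (sm c 1)) \<and>
       (\<forall>f\<in>H. \<forall>a\<in>Om 0.
          nab (\<lambda>w. if w \<in> Om 1 then f (a * w) else 0) = actP (nab f) a + f (d a)))"

definition homAB_act :: "'v::ring_1 set \<Rightarrow> ('v \<Rightarrow> 'm::ab_group_add) \<Rightarrow> 'v \<Rightarrow> ('v \<Rightarrow> 'm)" where
  "homAB_act B g b = (\<lambda>b'. if b' \<in> B then g (b * b') else 0)"

definition ident :: "('v::ring_1 \<Rightarrow> 'v \<Rightarrow> 'm) \<Rightarrow> ('v \<Rightarrow> 'm)" where
  "ident F = (\<lambda>w. F w 1)"

definition nabla_theta ::
  "(nat \<Rightarrow> 'w::ring_1 set) \<Rightarrow> (nat \<Rightarrow> 'v::ring_1 set) \<Rightarrow> ('v \<Rightarrow> 'v) \<Rightarrow> ('w \<Rightarrow> 'v) \<Rightarrow>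
   (('w \<Rightarrow> 'm::ab_group_add) \<Rightarrow> 'm) \<Rightarrow> ('v \<Rightarrow> 'm) \<Rightarrow> ('v \<Rightarrow> 'm)" where
  "nabla_theta OmA OmB dB th nab0 f =
     (\<lambda>b. if b \<in> OmB 0
          then nab0 (\<lambda>w. if w \<in> OmA 1 then f (b * th w) else 0) - f (dB b)
          else 0)"

end

theory Submission
  imports Defs
begin

theorem mainTheorem4:
  fixes smA :: "'k::field \<Rightarrow> 'w::ring_1 \<Rightarrow> 'w" and OmA :: "nat \<Rightarrow> 'w set" and dA :: "'w \<Rightarrow> 'w"
    and smB :: "'k \<Rightarrow> 'v::ring_1 \<Rightarrow> 'v" and OmB :: "nat \<Rightarrow> 'v set" and dB :: "'v \<Rightarrow> 'v"
    and th :: "'w \<Rightarrow> 'v"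
    and act :: "'m::ab_group_add \<Rightarrow> 'w \<Rightarrow> 'm"
    and nab0 :: "('w \<Rightarrow> 'm) \<Rightarrow> 'm"
  assumes "dga smA OmA dA"
    and "dga smB OmB dB"
    and "dga_map smA OmA dA smB OmB dB th"
    and "right_module (OmA 0) act"
    and "hom_connection smA OmA dA UNIV act nab0"
  shows "hom_connection smB OmB dB
           (homR (OmA 0) (OmB 0) (\<lambda>b a. b * th a) UNIV act)
           (homAB_act (OmB 0))
           (\<lambda>F. nabla_theta OmA OmB dB th nab0 (ident F))"
proof -
  note dB = assms(2)[unfolded dga_def]
  note thmp = assms(3)[unfolded dga_map_def]
  note rm = assms(4)[unfolded right_module_def]
  define HA where "HA = homR (OmA 0) (OmA 1) (\<lambda>w a. w * a) UNIV act"
  note hc = assms(5)[unfolded hom_connection_def Let_def, folded HA_def]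
  define P where "P = homR (OmA 0) (OmB 0) (\<lambda>b a. b * th a) UNIV act"
  define hact :: "('v \<Rightarrow> 'm) \<Rightarrow> 'v \<Rightarrow> 'v \<Rightarrow> 'm" where "hact = homAB_act (OmB 0)"
  define HB where "HB = homR (OmB 0) (OmB 1) (\<lambda>w a. w * a) P hact"
  define nab where "nab = (\<lambda>F. nabla_theta OmA OmB dB th nab0 (ident F))"
  have Bsub: "\<forall>n. 0 \<in> OmB n \<and> (\<forall>x\<in>OmB n. \<forall>y\<in>OmB n. x + y \<in> OmB n) \<and> (\<forall>c. \<forall>x\<in>OmB n. smB c x \<in> OmB n)"
    using assms(2) unfolding dga_def by (elim conjE) assumption
  have Bmul0: "\<forall>m n. \<forall>x\<in>OmB m. \<forall>y\<in>OmB n. x * y \<in> OmB (m + n)"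
    using assms(2) unfolding dga_def by (elim conjE) assumption
  have Bsmm: "\<forall>c x y. smB c (x * y) = smB c x * y \<and> smB c (x * y) = x * smB c y"
    using assms(2) unfolding dga_def by (elim conjE) assumption
  have B1: "(1::'v) \<in> OmB 0"
    using assms(2) unfolding dga_def by (elim conjE) assumption
  have dBadd0: "\<forall>x y. dB (x + y) = dB x + dB y"
    using assms(2) unfolding dga_def by (elim conjE) assumption
  have dBadd: "\<And>x y. dB (x + y) = dB x + dB y" using dBadd0 by blast
  have dBsm0: "\<forall>c x. dB (smB c x) = smB c (dB x)"
    using assms(2) unfolding dga_def by (elim conjE) assumption
  have dBsm: "\<And>c x. dB (smB c x) = smB c (dB x)" using dBsm0 by blast
  have dBdeg: "\<forall>n. \<forall>x\<in>OmB n. dB x \<in> OmB (Suc n)"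
    using assms(2) unfolding dga_def by (elim conjE) assumption
  have leib0: "\<forall>n. \<forall>x\<in>OmB n. \<forall>y. dB (x * y) = dB x * y + (-1) ^ n * x * dB y"
    using assms(2) unfolding dga_def by (elim conjE) assumption
  have Asub: "\<forall>n. 0 \<in> OmA n \<and> (\<forall>x\<in>OmA n. \<forall>y\<in>OmA n. x + y \<in> OmA n) \<and> (\<forall>c. \<forall>x\<in>OmA n. smA c x \<in> OmA n)"
    using assms(1) unfolding dga_def by (elim conjE) assumption
  have Amul0: "\<forall>m n. \<forall>x\<in>OmA m. \<forall>y\<in>OmA n. x * y \<in> OmA (m + n)"
    using assms(1) unfolding dga_def by (elim conjE) assumption
  have dAdeg: "\<forall>n. \<forall>x\<in>OmA n. dA x \<in> OmA (Suc n)"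
    using assms(1) unfolding dga_def by (elim conjE) assumption
  have B0add: "\<And>x y. x \<in> OmB 0 \<Longrightarrow> y \<in> OmB 0 \<Longrightarrow> x + y \<in> OmB 0" using Bsub by blast
  have B1add: "\<And>x y. x \<in> OmB 1 \<Longrightarrow> y \<in> OmB 1 \<Longrightarrow> x + y \<in> OmB 1" using Bsub by blast
  have Bmul: "\<And>m n x y. x \<in> OmB m \<Longrightarrow> y \<in> OmB n \<Longrightarrow> x * y \<in> OmB (m + n)" using Bmul0 by blast
  have B01: "\<And>x y. x \<in> OmB 0 \<Longrightarrow> y \<in> OmB 1 \<Longrightarrow> x * y \<in> OmB 1" using Bmul[of _ 0 _ 1] by simp
  have B10: "\<And>x y. x \<in> OmB 1 \<Longrightarrow> y \<in> OmB 0 \<Longrightarrow> x * y \<in> OmB 1" using Bmul[of _ 1 _ 0] by simp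
  have B00: "\<And>x y. x \<in> OmB 0 \<Longrightarrow> y \<in> OmB 0 \<Longrightarrow> x * y \<in> OmB 0" using Bmul[of _ 0 _ 0] by simp
  have dB01: "\<And>x. x \<in> OmB 0 \<Longrightarrow> dB x \<in> OmB 1" using dBdeg by (metis One_nat_def)
  have leib: "\<And>x y. x \<in> OmB 0 \<Longrightarrow> dB (x * y) = dB x * y + x * dB y"
  proof -
    fix x y assume "x \<in> OmB 0"
    hence "dB (x * y) = dB x * y + (-1) ^ 0 * x * dB y" using leib0 by blast
    thus "dB (x * y) = dB x * y + x * dB y" by simp
  qed
  have smL: "\<And>c x. smB c x = smB c 1 * x" using Bsmm by (metis mult_1_left)
  have smR: "\<And>c x. smB c x = x * smB c 1" using Bsmm by (metis mult_1_right)
  have sm1: "\<And>c. smB c 1 \<in> OmB 0" using Bsub B1 by blast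
  have thadd: "\<And>x y. th (x + y) = th x + th y" using thmp by blast
  have thmul: "\<And>x y. th (x * y) = th x * th y" using thmp by blast
  have thdeg: "\<And>n x. x \<in> OmA n \<Longrightarrow> th x \<in> OmB n" using thmp by blast
  have thdeg1: "\<And>x. x \<in> OmA 1 \<Longrightarrow> th x \<in> OmB 1" using thdeg by blast
  have thd: "\<And>x. th (dA x) = dB (th x)" using thmp by blast
  have dA01: "\<And>x. x \<in> OmA 0 \<Longrightarrow> dA x \<in> OmA 1" using dAdeg by (metis One_nat_def)
  have actadd: "\<And>m m' a. a \<in> OmA 0 \<Longrightarrow> act (m + m') a = act m a + act m' a" using rm by blast
  have actdiff: "\<And>m m' a. a \<in> OmA 0 \<Longrightarrow> act (m - m') a = act m a - act m' a"
  proof -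
    fix m m' a assume a: "a \<in> OmA 0"
    have "act (m - m' + m') a = act (m - m') a + act m' a" using actadd[OF a] .
    thus "act (m - m') a = act m a - act m' a" by (simp add: algebra_simps)
  qed
  have nab0add: "\<And>f g. f \<in> HA \<Longrightarrow> g \<in> HA \<Longrightarrow> nab0 (f + g) = nab0 f + nab0 g" using hc by blast
  have nab0leib: "\<And>f a. f \<in> HA \<Longrightarrow> a \<in> OmA 0 \<Longrightarrow>
      nab0 (\<lambda>w. if w \<in> OmA 1 then f (a * w) else 0) = act (nab0 f) a + f (dA a)" using hc by blast

  have Fval: "\<And>F x. F \<in> HB \<Longrightarrow> x \<in> OmB 1 \<Longrightarrow> F x \<in> P" unfolding HB_def homR_def by blast
  have Fadd: "\<And>F x y. F \<in> HB \<Longrightarrow> x \<in> OmB 1 \<Longrightarrow> y \<in> OmB 1 \<Longrightarrow> F (x + y) = F x + F y"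
    unfolding HB_def homR_def by blast
  have Flin: "\<And>F x b. F \<in> HB \<Longrightarrow> x \<in> OmB 1 \<Longrightarrow> b \<in> OmB 0 \<Longrightarrow> F (x * b) = hact (F x) b"
    unfolding HB_def homR_def by blast
  have Fout: "\<And>F x. F \<in> HB \<Longrightarrow> x \<notin> OmB 1 \<Longrightarrow> F x = 0" unfolding HB_def homR_def by blast
  have Plin: "\<And>g b a. g \<in> P \<Longrightarrow> b \<in> OmB 0 \<Longrightarrow> a \<in> OmA 0 \<Longrightarrow> g (b * th a) = act (g b) a"
    unfolding P_def homR_def by blast
  have Padd: "\<And>g b b'. g \<in> P \<Longrightarrow> b \<in> OmB 0 \<Longrightarrow> b' \<in> OmB 0 \<Longrightarrow> g (b + b') = g b + g b'"
    unfolding P_def homR_def by blast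
  have Pout: "\<And>g b. g \<in> P \<Longrightarrow> b \<notin> OmB 0 \<Longrightarrow> g b = 0" unfolding P_def homR_def by blast
  have identadd: "\<And>F x y. F \<in> HB \<Longrightarrow> x \<in> OmB 1 \<Longrightarrow> y \<in> OmB 1 \<Longrightarrow> ident F (x + y) = ident F x + ident F y"
    unfolding ident_def using Fadd by simp
  have identmul: "\<And>F x b. F \<in> HB \<Longrightarrow> x \<in> OmB 1 \<Longrightarrow> b \<in> OmB 0 \<Longrightarrow> ident F (x * b) = F x b"
    unfolding ident_def using Flin B1 by (simp add: hact_def homAB_act_def)
  have identA: "\<And>F x a. F \<in> HB \<Longrightarrow> x \<in> OmB 1 \<Longrightarrow> a \<in> OmA 0 \<Longrightarrow> ident F (x * th a) = act (ident F x) a"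
  proof -
    fix F x a assume F: "F \<in> HB" and x: "x \<in> OmB 1" and a: "a \<in> OmA 0"
    have "ident F (x * th a) = F x (th a)" using identmul[OF F x thdeg[OF a]] .
    also have "\<dots> = F x (1 * th a)" by simp
    also have "\<dots> = act (F x 1) a" using Plin[OF Fval[OF F x] B1 a] .
    finally show "ident F (x * th a) = act (ident F x) a" unfolding ident_def .
  qed
  define gb :: "('v \<Rightarrow> 'v \<Rightarrow> 'm) \<Rightarrow> 'v \<Rightarrow> 'w \<Rightarrow> 'm" where "gb = (\<lambda>F b w. if w \<in> OmA 1 then ident F (b * th w) else 0)"
  have gbHA: "\<And>F b. F \<in> HB \<Longrightarrow> b \<in> OmB 0 \<Longrightarrow> gb F b \<in> HA"
  proof -
    fix F b assume F: "F \<in> HB" and b: "b \<in> OmB 0"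
    have bt: "\<And>w. w \<in> OmA 1 \<Longrightarrow> b * th w \<in> OmB 1" using B01[OF b] thdeg by blast
    show "gb F b \<in> HA" unfolding HA_def homR_def gb_def
    proof (intro CollectI conjI ballI allI impI)
      fix x y assume x: "x \<in> OmA 1" and y: "y \<in> OmA 1"
      have "x + y \<in> OmA 1" using Asub x y by blast
      thus "(if x + y \<in> OmA 1 then ident F (b * th (x + y)) else 0) =
            (if x \<in> OmA 1 then ident F (b * th x) else 0) + (if y \<in> OmA 1 then ident F (b * th y) else 0)"
        using x y identadd[OF F bt[OF x] bt[OF y]] by (simp add: thadd distrib_left)
    next
      fix x a assume x: "x \<in> OmA 1" and a: "a \<in> OmA 0"
      have "x * a \<in> OmA 1" using Amul0 x a by (metis add_0_right)
      thus "(if x * a \<in> OmA 1 then ident F (b * th (x * a)) else 0) =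
            act (if x \<in> OmA 1 then ident F (b * th x) else 0) a"
        using x identA[OF F bt[OF x] a] by (simp add: thmul mult.assoc)
    qed auto
  qed
  have nabval: "\<And>F b. b \<in> OmB 0 \<Longrightarrow> nab F b = nab0 (gb F b) - ident F (dB b)"
    unfolding nab_def nabla_theta_def gb_def by simp
  have nabout: "\<And>F b. b \<notin> OmB 0 \<Longrightarrow> nab F b = 0"
    unfolding nab_def nabla_theta_def by simp

  have G1: "\<forall>F\<in>HB. nab F \<in> P"
  proof
    fix F assume F: "F \<in> HB"
    show "nab F \<in> P" unfolding P_def homR_def
    proof (intro CollectI conjI ballI allI impI)
      fix b b' assume b: "b \<in> OmB 0" and b': "b' \<in> OmB 0"
      have e: "gb F (b + b') = gb F b + gb F b'"
      proof
        fix w show "gb F (b + b') w = (gb F b + gb F b') w"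
          unfolding gb_def using identadd[OF F] B01[OF b] B01[OF b'] thdeg1[of w]
          by (simp add: distrib_right)
      qed
      have "nab F (b + b') = nab0 (gb F (b + b')) - ident F (dB (b + b'))"
        by (rule nabval[OF B0add[OF b b']])
      also have "\<dots> = (nab0 (gb F b) + nab0 (gb F b')) - (ident F (dB b) + ident F (dB b'))"
        using e nab0add[OF gbHA[OF F b] gbHA[OF F b']] identadd[OF F dB01[OF b] dB01[OF b']] dBadd
        by simp
      also have "\<dots> = (nab0 (gb F b) - ident F (dB b)) + (nab0 (gb F b') - ident F (dB b'))"
        by (simp add: algebra_simps)
      also have "\<dots> = nab F b + nab F b'" using nabval[OF b] nabval[OF b'] by simp
      finally show "nab F (b + b') = nab F b + nab F b'" .
    next
      fix b a assume b: "b \<in> OmB 0" and a: "a \<in> OmA 0"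
      have ba: "b * th a \<in> OmB 0" using B00[OF b thdeg[OF a]] .
      have e: "gb F (b * th a) = (\<lambda>w. if w \<in> OmA 1 then gb F b (a * w) else 0)"
      proof
        fix w
        have "w \<in> OmA 1 \<Longrightarrow> a * w \<in> OmA 1" using Amul0 a by (metis add_0_left)
        thus "gb F (b * th a) w = (if w \<in> OmA 1 then gb F b (a * w) else 0)"
          unfolding gb_def by (simp add: thmul mult.assoc)
      qed
      have dba: "dB (b * th a) = dB b * th a + b * dB (th a)" using leib[OF b] .
      have "ident F (dB (b * th a)) = act (ident F (dB b)) a + ident F (b * th (dA a))"
        using dba identadd[OF F B10[OF dB01[OF b] thdeg[OF a]] B01[OF b dB01[OF thdeg[OF a]]]]
          identA[OF F dB01[OF b] a] thd by simp
      moreover have "gb F b (dA a) = ident F (b * th (dA a))" unfolding gb_def using dA01[OF a] by simp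
      ultimately have "nab F (b * th a) = (act (nab0 (gb F b)) a + ident F (b * th (dA a)))
           - (act (ident F (dB b)) a + ident F (b * th (dA a)))"
        using nabval[OF ba] e nab0leib[OF gbHA[OF F b] a] by simp
      also have "\<dots> = act (nab0 (gb F b)) a - act (ident F (dB b)) a" by (simp add: algebra_simps)
      also have "\<dots> = act (nab0 (gb F b) - ident F (dB b)) a" using actdiff[OF a] by simp
      also have "\<dots> = act (nab F b) a" using nabval[OF b] by simp
      finally show "nab F (b * th a) = act (nab F b) a" .
    next
      fix b assume "b \<notin> OmB 0" thus "nab F b = 0" using nabout by simp
    qed auto
  qed
  have G2: "\<forall>F\<in>HB. \<forall>G\<in>HB. nab (F + G) = nab F + nab G"
  proof (intro ballI)
    fix F G assume F: "F \<in> HB" and G: "G \<in> HB"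
    show "nab (F + G) = nab F + nab G"
    proof
      fix b show "nab (F + G) b = (nab F + nab G) b"
      proof (cases "b \<in> OmB 0")
        case False thus ?thesis using nabout by simp
      next
        case b: True
        have e: "gb (F + G) b = gb F b + gb G b" unfolding gb_def ident_def by auto
        have "nab (F + G) b = (nab0 (gb F b) + nab0 (gb G b)) - (ident F (dB b) + ident G (dB b))"
          using nabval[where F="F+G", OF b] e nab0add[OF gbHA[OF F b] gbHA[OF G b]]
          by (simp add: ident_def)
        also have "\<dots> = (nab0 (gb F b) - ident F (dB b)) + (nab0 (gb G b) - ident G (dB b))"
          by (simp add: algebra_simps)
        also have "\<dots> = (nab F + nab G) b" using nabval[OF b] by simp
        finally show ?thesis .
      qed
    qed
  qed
  have G3: "\<forall>c. \<forall>F\<in>HB. nab (\<lambda>w. hact (F w) (smB c 1)) = hact (nab F) (smB c 1)"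
  proof (intro allI ballI)
    fix c F assume F: "F \<in> HB"
    define s where "s = smB c 1"
    have s: "s \<in> OmB 0" using sm1 s_def by simp
    have key: "\<And>x. x \<in> OmB 1 \<Longrightarrow> ident F (s * x) = F x s"
      using identmul[OF F _ s] smL smR s_def by metis
    show "nab (\<lambda>w. hact (F w) (smB c 1)) = hact (nab F) (smB c 1)"
    proof
      fix b show "nab (\<lambda>w. hact (F w) (smB c 1)) b = hact (nab F) (smB c 1) b"
      proof (cases "b \<in> OmB 0")
        case False thus ?thesis using nabout by (simp add: hact_def homAB_act_def)
      next
        case b: True
        have sb: "s * b \<in> OmB 0" using B00[OF s b] .
        have e1: "ident (\<lambda>w. hact (F w) s) x = F x s" for x
          unfolding ident_def hact_def homAB_act_def using B1 by simp
        have e: "gb (\<lambda>w. hact (F w) s) b = gb F (s * b)"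
        proof
          fix w show "gb (\<lambda>w. hact (F w) s) b w = gb F (s * b) w"
            unfolding gb_def e1 using key[OF B01[OF b thdeg1[of w]]] by (simp add: mult.assoc)
        qed
        have "dB (s * b) = s * dB b" using dBsm smL s_def by metis
        hence "ident F (dB (s * b)) = F (dB b) s" using key[OF dB01[OF b]] by simp
        thus ?thesis using nabval[where F="\<lambda>w. hact (F w) s", OF b] nabval[where F=F, OF sb] e e1 b
          by (simp add: hact_def homAB_act_def s_def[symmetric])
      qed
    qed
  qed
  have G4: "\<forall>F\<in>HB. \<forall>b0\<in>OmB 0. nab (\<lambda>w. if w \<in> OmB 1 then F (b0 * w) else 0) = hact (nab F) b0 + F (dB b0)"
  proof (intro ballI)
    fix F b0 assume F: "F \<in> HB" and b0: "b0 \<in> OmB 0"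
    define F' where "F' = (\<lambda>w. if w \<in> OmB 1 then F (b0 * w) else 0)"
    show "nab F' = hact (nab F) b0 + F (dB b0)" unfolding F'_def[symmetric]
    proof
      fix b show "nab F' b = (hact (nab F) b0 + F (dB b0)) b"
      proof (cases "b \<in> OmB 0")
        case False
        thus ?thesis using nabout Pout[OF Fval[OF F dB01[OF b0]]]
          by (simp add: hact_def homAB_act_def)
      next
        case b: True
        have bb: "b0 * b \<in> OmB 0" using B00[OF b0 b] .
        have e1: "\<And>x. x \<in> OmB 1 \<Longrightarrow> ident F' x = ident F (b0 * x)" unfolding F'_def ident_def by simp
        have e: "gb F' b = gb F (b0 * b)"
        proof
          fix w show "gb F' b w = gb F (b0 * b) w"
            unfolding gb_def using e1[OF B01[OF b thdeg1[of w]]] by (simp add: mult.assoc)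
        qed
        have id: "ident F (dB (b0 * b)) = F (dB b0) b + ident F (b0 * dB b)"
          using leib[OF b0] identadd[OF F B10[OF dB01[OF b0] b] B01[OF b0 dB01[OF b]]]
            identmul[OF F dB01[OF b0] b] by simp
        have "nab F' b = nab0 (gb F (b0 * b)) - ident F (b0 * dB b)"
          using nabval[where F=F', OF b] e e1[OF dB01[OF b]] by simp
        also have "\<dots> = (nab0 (gb F (b0 * b)) - (F (dB b0) b + ident F (b0 * dB b))) + F (dB b0) b"
          by (simp add: algebra_simps)
        also have "\<dots> = nab F (b0 * b) + F (dB b0) b" using nabval[where F=F, OF bb] id by simp
        also have "\<dots> = (hact (nab F) b0 + F (dB b0)) b" using b by (simp add: hact_def homAB_act_def)
        finally show ?thesis .
      qed
    qed
  qed
  show ?thesis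
    unfolding hom_connection_def Let_def
    using G1 G2 G3 G4 unfolding HB_def P_def hact_def nab_def by blast
qed

end
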